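(* Let $n\ge1$, $1\le i\le n$ be integers, $\alpha,\beta>0$, $\tau\ge0$ with $i\beta(\tau+1)>\tau$. Put $$a=\frac{(n-i+1)\tau\beta+(n-i+1)\beta+\tau}{\beta},\qquad b=\frac{i\tau\beta+i\beta-\tau}{\beta}.$$ Then $J^{(i)}_\tau(\alpha)=A_1+A_2-A_3$, where $$A_1=\left(\frac{\beta}{\alpha}\right)^{\tau+2}(n-i+1)^2c(i,n)^{\tau+1}B(a,b),$$ $$A_2=\left(\frac{\beta}{\alpha}\right)^{\tau+2}(n+1)^2c(i,n)^{\tau+1}\cdot\frac{(n-i+1)\tau\beta+(n-i+2)\beta+\tau}{\beta[(n+1)\tau+(n+2)]}\cdot\frac{(n-i+1)\tau\beta+(n-i+1)\beta+\tau}{\beta[(n+1)\tau+(n+1)]}\,B(a,b),$$ $$A_3=\left(\frac{\beta}{\alpha}\right)^{\tau+2}2(n-i+1)(n+1)c(i,n)^{\tau+1}\cdot\frac{(n-i+1)\tau\beta+(n-i+1)\beta+\tau}{(n+1)\tau\beta+(n+1)\beta}\,B(a,b).$$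
   Context: For integers $1\le i\le n$, $c(i,n)=\frac{n!}{(n-i)!(i-1)!}$ and $f^{(i)}_{\alpha,\beta}(x)=\frac{c(i,n)\beta (x/\alpha)^{i\beta-1}}{\alpha(1+(x/\alpha)^\beta)^{n+1}}$, $x>0$, is the density of the $i$-th order statistic of a sample of size $n$ from the log-logistic distribution with scale $\alpha>0$ and shape $\beta>0$ (density $\beta\alpha^\beta x^{\beta-1}/(x^\beta+\alpha^\beta)^2$). With $\beta$ regarded as known, $J^{(i)}_\tau(\alpha)=\int_0^\infty\left(\frac{\partial}{\partial\alpha}\log f^{(i)}_{\alpha,\beta}(x)\right)^2 f^{(i)}_{\alpha,\beta}(x)^{\tau+1}\,dx$. $B(a,b)=\int_0^1x^{a-1}(1-x)^{b-1}dx$ is the Beta function. *)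

theory Defs
  imports "HOL-Analysis.Analysis"
begin

definition c_coef :: "nat \<Rightarrow> nat \<Rightarrow> real" where
  "c_coef i n = fact n / (fact (n - i) * fact (i - 1))"

text \<open>Density of the i-th order statistic of a sample of size n from the
  log-logistic distribution with scale alpha and shape beta.\<close>
definition f_os :: "nat \<Rightarrow> nat \<Rightarrow> real \<Rightarrow> real \<Rightarrow> real \<Rightarrow> real" where
  "f_os i n \<alpha> \<beta> x =
     c_coef i n * \<beta> * (x / \<alpha>) powr (real i * \<beta> - 1)
     / (\<alpha> * (1 + (x / \<alpha>) powr \<beta>) ^ (n + 1))"

definition J_os :: "nat \<Rightarrow> nat \<Rightarrow> real \<Rightarrow> real \<Rightarrow> real \<Rightarrow> real" where
  "J_os i n \<beta> \<tau> \<alpha> =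
     (LBINT x:{0<..}. (deriv (\<lambda>a. ln (f_os i n a \<beta> x)) \<alpha>)\<^sup>2
                        * (f_os i n \<alpha> \<beta> x) powr (\<tau> + 1))"

end

theory Submission
  imports Defs
begin

lemma c_coef_pos: "c_coef i n > 0"
  unfolding c_coef_def by (simp add: fact_gt_zero)

lemma ln_gen:
  fixes C X a P :: real
  assumes "C > 0" "X > 0" "a > 0" "P > 0"
  shows "ln (C * X / (a * P ^ m)) = ln C + ln X - ln a - real m * ln P"
  using assms by (simp add: ln_div ln_mult ln_realpow)

lemma ln_f_os:
  assumes "a > 0" "x > 0" "\<beta> > 0"
  shows "ln (f_os i n a \<beta> x) = ln (c_coef i n * \<beta>) + (real i * \<beta> - 1) * (ln x - ln a) - ln a
           - real (n+1) * ln (1 + exp (\<beta> * (ln x - ln a)))"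
proof -
  have e: "(x / a) powr s = exp (s * (ln x - ln a))" for s
    using assms by (simp add: powr_def ln_div)
  have cp: "c_coef i n * \<beta> > 0" using c_coef_pos assms by simp
  have "f_os i n a \<beta> x = (c_coef i n * \<beta>) * exp ((real i * \<beta> - 1) * (ln x - ln a))
          / (a * (1 + exp (\<beta> * (ln x - ln a))) ^ (n + 1))"
    unfolding f_os_def e by simp
  also have "ln \<dots> = ln (c_coef i n * \<beta>) + (real i * \<beta> - 1) * (ln x - ln a) - ln a
           - real (n+1) * ln (1 + exp (\<beta> * (ln x - ln a)))"
  proof -
    have P: "1 + exp (\<beta> * (ln x - ln a)) > 0" by (simp add: add_pos_pos)
    have d: "a * (1 + exp (\<beta> * (ln x - ln a))) ^ (n + 1) > 0" using P assms by simp
    show ?thesis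
      using ln_gen[OF cp exp_gt_zero assms(1) P, of "(real i * \<beta> - 1) * (ln x - ln a)" "n+1"]
      by simp
  qed
  finally show ?thesis .
qed

lemma deriv_score:
  assumes "\<alpha> > 0" "x > 0" "\<beta> > 0"
  shows "deriv (\<lambda>a. ln (f_os i n a \<beta> x)) \<alpha>
     = \<beta> / \<alpha> * (real (n+1) * ((x/\<alpha>) powr \<beta> / (1 + (x/\<alpha>) powr \<beta>)) - real i)"
proof -
  define L where "L a = ln (c_coef i n * \<beta>) + (real i * \<beta> - 1) * (ln x - ln a) - ln a
           - real (n+1) * ln (1 + exp (\<beta> * (ln x - ln a)))" for a
  define E where "E = exp (\<beta> * (ln x - ln \<alpha>))"
  have E: "(x/\<alpha>) powr \<beta> = E" unfolding E_def using assms by (simp add: powr_def ln_div)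
  have Epos: "E > 0" unfolding E_def by simp
  have alg: "(real i * \<beta> - 1) * (0 - 1/\<alpha>) - 1/\<alpha> - real (n+1) * ((e * (\<beta> * (0 - 1/\<alpha>))) / (1 + e))
     = \<beta> / \<alpha> * (real (n+1) * (e / (1 + e)) - real i)" if "e > 0" for e
  proof -
    have "1 + e \<noteq> 0" using that by simp
    then show ?thesis using that assms by (simp add: divide_simps) (simp add: algebra_simps)
  qed
  have "(L has_real_derivative
      ((real i * \<beta> - 1) * (0 - 1/\<alpha>) - 1/\<alpha> - real (n+1) * ((E * (\<beta> * (0 - 1/\<alpha>))) / (1 + E)))) (at \<alpha>)"
    unfolding L_def E_def using assms
    by (auto intro!: derivative_eq_intros simp: add_pos_pos) (simp add: mult_ac)
  then have "(L has_real_derivative (\<beta> / \<alpha> * (real (n+1) * (E / (1 + E)) - real i))) (at \<alpha>)"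
    using alg[OF Epos] by simp
  then have "((\<lambda>a. ln (f_os i n a \<beta> x)) has_real_derivative
      (\<beta> / \<alpha> * (real (n+1) * (E / (1 + E)) - real i))) (at \<alpha>)"
    by (rule has_field_derivative_transform_within_open[where S="{0<..}"]) (use assms ln_f_os in \<open>auto simp: L_def\<close>)
  then have "deriv (\<lambda>a. ln (f_os i n a \<beta> x)) \<alpha> = \<beta> / \<alpha> * (real (n+1) * (E / (1 + E)) - real i)"
    by (rule DERIV_imp_deriv)
  then show ?thesis unfolding E .
qed


lemma subst_point:
  fixes \<alpha> \<beta> \<tau> u :: real
  assumes ap: "\<alpha> > 0" and bp: "\<beta> > 0" and u0: "0 < u" and u1: "u < 1"
  defines "s \<equiv> u / (1 - u)"
  shows "(\<alpha> / \<beta> * s powr (1/\<beta>) / (u * (1 - u))) *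
          ((\<beta> / \<alpha> * (real (n+1) * (((\<alpha> * s powr (1/\<beta>))/\<alpha>) powr \<beta> / (1 + ((\<alpha> * s powr (1/\<beta>))/\<alpha>) powr \<beta>)) - real i))\<^sup>2
           * f_os i n \<alpha> \<beta> (\<alpha> * s powr (1/\<beta>)) powr (\<tau> + 1))
       = (\<beta> / \<alpha>) powr (\<tau> + 2) * c_coef i n powr (\<tau> + 1) * (real (n+1) * u - real i)\<^sup>2
          * u powr ((real i * \<tau> * \<beta> + real i * \<beta> - \<tau>) / \<beta> - 1)
          * (1 - u) powr (((real n - real i + 1) * \<tau> * \<beta> + (real n - real i + 1) * \<beta> + \<tau>) / \<beta> - 1)"
proof -
  have sp: "s > 0" using u0 u1 by (simp add: s_def)
  have gs: "(\<alpha> * s powr (1/\<beta>))/\<alpha> = s powr (1/\<beta>)" using ap by simp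
  have t: "(s powr (1/\<beta>)) powr \<beta> = s" using sp bp by (simp add: powr_powr)
  have s1: "1 + s = 1 / (1 - u)" using u1 by (simp add: s_def field_simps)
  have us: "s / (1 + s) = u" using u1 by (simp add: s_def field_simps)
  define F where "F = c_coef i n * \<beta> * (s powr (1/\<beta>)) powr (real i * \<beta> - 1) / (\<alpha> * (1 + s) ^ (n + 1))"
  have f: "f_os i n \<alpha> \<beta> (\<alpha> * s powr (1/\<beta>)) = F" unfolding f_os_def F_def gs t by simp
  have Fp: "F > 0" unfolding F_def using sp ap bp c_coef_pos[of i n] by (simp add: add_pos_pos)
  have sc: "(\<beta> / \<alpha> * (real (n+1) * (((\<alpha> * s powr (1/\<beta>))/\<alpha>) powr \<beta> / (1 + ((\<alpha> * s powr (1/\<beta>))/\<alpha>) powr \<beta>)) - real i))\<^sup>2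
     = (\<beta>/\<alpha>)\<^sup>2 * (real (n+1) * u - real i)\<^sup>2"
    unfolding gs t us by (simp add: power_mult_distrib power_divide)
  have key: "(\<alpha> / \<beta> * s powr (1/\<beta>) / (u * (1 - u))) * (\<beta>/\<alpha>)\<^sup>2 * F powr (\<tau> + 1)
     = (\<beta> / \<alpha>) powr (\<tau> + 2) * c_coef i n powr (\<tau> + 1)
          * u powr ((real i * \<tau> * \<beta> + real i * \<beta> - \<tau>) / \<beta> - 1)
          * (1 - u) powr (((real n - real i + 1) * \<tau> * \<beta> + (real n - real i + 1) * \<beta> + \<tau>) / \<beta> - 1)"
    (is "?L = ?R")
  proof -
    have cp: "c_coef i n > 0" by (rule c_coef_pos)
    have v: "1 - u > 0" using u1 by simp
    have lns: "ln s = ln u - ln (1 - u)" unfolding s_def using u0 v by (simp add: ln_div)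
    have ln1s: "ln (1 + s) = - ln (1 - u)" unfolding s1 using v by (simp add: ln_div)
    have lnF: "ln F = ln (c_coef i n) + ln \<beta> + (real i * \<beta> - 1) / \<beta> * (ln u - ln (1 - u))
                - ln \<alpha> + real (n+1) * ln (1 - u)"
    proof -
      have "ln F = ln (c_coef i n * \<beta>) + ln ((s powr (1/\<beta>)) powr (real i * \<beta> - 1)) - ln \<alpha>
                   - real (n+1) * ln (1 + s)"
        unfolding F_def by (rule ln_gen) (use sp ap bp cp in auto)
      also have "ln ((s powr (1/\<beta>)) powr (real i * \<beta> - 1)) = (real i * \<beta> - 1) / \<beta> * ln s"
        using sp by (simp add: ln_powr)
      also have "ln (c_coef i n * \<beta>) = ln (c_coef i n) + ln \<beta>" using cp bp by (simp add: ln_mult)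
      finally show ?thesis unfolding lns ln1s by simp
    qed
    have "ln ?L = ln \<alpha> - ln \<beta> + (1/\<beta>) * (ln u - ln (1 - u)) - ln u - ln (1 - u)
                 + 2 * (ln \<beta> - ln \<alpha>) + (\<tau> + 1) * ln F"
      using sp ap bp Fp u0 v
      by (simp add: ln_div ln_mult ln_powr ln_realpow lns)
    also have "\<dots> = ln ?R"
      using sp ap bp Fp u0 v cp
      by (simp add: ln_div ln_mult ln_powr lnF field_simps)
    finally have "ln ?L = ln ?R" .
    moreover have "?L > 0" using sp ap bp Fp u0 v by simp
    moreover have "?R > 0" using sp ap bp Fp u0 v cp by simp
    ultimately show ?thesis by simp
  qed
  show ?thesis unfolding sc f using arg_cong[OF key, of "\<lambda>z. z * (real (n+1) * u - real i)\<^sup>2"]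
    by (simp only: mult_ac)
qed


lemma beta_int:
  fixes a b p q :: real
  assumes a: "a > 0" and b: "b > 0"
  shows "((\<lambda>u. (p * u - q)\<^sup>2 * u powr (b - 1) * (1 - u) powr (a - 1)) has_integral
          ((p - q)\<^sup>2 * Beta b a - 2 * (p - q) * p * Beta b (a + 1) + p\<^sup>2 * Beta b (a + 2))) {0<..<1}"
proof -
  have I0: "((\<lambda>u. u powr (b - 1) * (1 - u) powr (a - 1)) has_integral Beta b a) {0<..<1}"
    using has_integral_Beta_real[of b a] a b by (simp add: has_integral_Icc_iff_Ioo)
  have I1: "((\<lambda>u. u powr (b - 1) * (1 - u) powr (a + 1 - 1)) has_integral Beta b (a+1)) {0<..<1}"
    using has_integral_Beta_real[of b "a+1"] a b by (simp add: has_integral_Icc_iff_Ioo)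
  have I2: "((\<lambda>u. u powr (b - 1) * (1 - u) powr (a + 2 - 1)) has_integral Beta b (a+2)) {0<..<1}"
    using has_integral_Beta_real[of b "a+2"] a b by (simp add: has_integral_Icc_iff_Ioo)
  have S: "((\<lambda>u. (p - q)\<^sup>2 * (u powr (b - 1) * (1 - u) powr (a - 1))
              - 2 * (p - q) * p * (u powr (b - 1) * (1 - u) powr (a + 1 - 1))
              + p\<^sup>2 * (u powr (b - 1) * (1 - u) powr (a + 2 - 1))) has_integral
          ((p - q)\<^sup>2 * Beta b a - 2 * (p - q) * p * Beta b (a + 1) + p\<^sup>2 * Beta b (a + 2))) {0<..<1}"
    by (intro has_integral_add has_integral_diff has_integral_mult_right I0 I1 I2)
  show ?thesis
  proof (rule has_integral_spike_finite[OF _ _ S, of "{}"])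
    fix u :: real assume u: "u \<in> {0<..<1} - {}"
    then have v: "1 - u > 0" by simp
    have e1: "(1 - u) powr (a + 1 - 1) = (1 - u) powr (a - 1) * (1 - u)"
    proof -
      have "(1 - u) powr (a - 1) * (1 - u) powr 1 = (1 - u) powr (a - 1 + 1)" by (rule powr_add[symmetric])
      then show ?thesis using v by simp
    qed
    have e2: "(1 - u) powr (a + 2 - 1) = (1 - u) powr (a - 1) * (1 - u)\<^sup>2"
    proof -
      have "(1 - u) powr (a - 1) * (1 - u) powr 2 = (1 - u) powr (a - 1 + 2)" by (rule powr_add[symmetric])
      then have "(1 - u) powr (a + 2 - 1) = (1 - u) powr (a - 1) * (1 - u) powr 2"
        by (simp add: add_ac)
      then show ?thesis using v by (simp add: powr_numeral)
    qed
    show "(p * u - q)\<^sup>2 * u powr (b - 1) * (1 - u) powr (a - 1) =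
              (p - q)\<^sup>2 * (u powr (b - 1) * (1 - u) powr (a - 1))
              - 2 * (p - q) * p * (u powr (b - 1) * (1 - u) powr (a + 1 - 1))
              + p\<^sup>2 * (u powr (b - 1) * (1 - u) powr (a + 2 - 1))"
      unfolding e1 e2 by (simp add: power2_eq_square algebra_simps)
  qed simp
qed

lemma beta_red:
  fixes a b :: real
  assumes a: "a > 0" and b: "b > 0"
  shows "Beta b (a + 1) = a / (a + b) * Beta a b"
        "Beta b (a + 2) = a / (a + b) * ((a + 1) / (a + b + 1)) * Beta a b"
proof -
  have r1: "(b + a) * Beta b (a + 1) = a * Beta b a" by (rule Beta_plus1_right) (use a b in auto)
  have r2: "(b + (a + 1)) * Beta b (a + 1 + 1) = (a + 1) * Beta b (a + 1)"
    by (rule Beta_plus1_right) (use a b in auto)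
  have ab: "a + b > 0" using a b by simp
  show 1: "Beta b (a + 1) = a / (a + b) * Beta a b"
    using r1 ab by (simp add: field_simps Beta_commute add.commute)
  have "Beta b (a + 2) = (a + 1) / (a + b + 1) * Beta b (a + 1)"
    using r2 ab by (simp add: field_simps add_ac)
  then show "Beta b (a + 2) = a / (a + b) * ((a + 1) / (a + b + 1)) * Beta a b"
    unfolding 1 by (simp add: mult_ac)
qed


lemma meas_H:
  "(\<lambda>x. indicator {0<..} x *\<^sub>R ((\<beta> / \<alpha> * (real (n+1) * ((x/\<alpha>) powr \<beta> / (1 + (x/\<alpha>) powr \<beta>)) - real i))\<^sup>2
       * f_os i n \<alpha> \<beta> x powr (\<tau> + 1))) \<in> borel_measurable lborel"
  unfolding f_os_def by measurable

lemma g_deriv: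
  fixes \<alpha> \<beta> u :: real
  assumes ap: "\<alpha> > 0" and bp: "\<beta> > 0" and u0: "0 < u" and u1: "u < 1"
  shows "((\<lambda>u. \<alpha> * (u / (1 - u)) powr (1/\<beta>)) has_field_derivative
           (\<alpha> / \<beta> * (u / (1 - u)) powr (1/\<beta>) / (u * (1 - u)))) (at u within S)"
proof -
  have v: "1 - u > 0" using u1 by simp
  have s: "u / (1 - u) > 0" using u0 v by simp
  have pw: "(u / (1 - u)) powr ((1 - \<beta>) / \<beta>) = (u / (1 - u)) powr (1/\<beta>) / (u / (1 - u))"
  proof -
    have "(1 - \<beta>) / \<beta> = 1/\<beta> - 1" using bp by (simp add: field_simps)
    then show ?thesis using s u0 v by (simp add: powr_diff)
  qed
  have pw2: "(u / (1 - u)) powr (1/\<beta> - 1) = (u / (1 - u)) powr (1/\<beta>) / (u / (1 - u))"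
    using s u0 v by (simp add: powr_diff)
  have u0': "u \<noteq> 0" "1 - u \<noteq> 0" using u0 v by auto
  show ?thesis
    using ap bp u0 v s u0'
    by (auto intro!: derivative_eq_intros simp: pw pw2)
qed


theorem theorem3:
  fixes n i :: nat and \<alpha> \<beta> \<tau> :: real
  assumes "n \<ge> 1" "1 \<le> i" "i \<le> n" "\<alpha> > 0" "\<beta> > 0" "\<tau> \<ge> 0"
    and "real i * \<beta> * (\<tau> + 1) > \<tau>"
  shows "let a = ((real n - real i + 1) * \<tau> * \<beta> + (real n - real i + 1) * \<beta> + \<tau>) / \<beta>;
             b = (real i * \<tau> * \<beta> + real i * \<beta> - \<tau>) / \<beta>;
             A1 = (\<beta> / \<alpha>) powr (\<tau> + 2) * (real n - real i + 1)\<^sup>2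
                  * c_coef i n powr (\<tau> + 1) * Beta a b;
             A2 = (\<beta> / \<alpha>) powr (\<tau> + 2) * (real n + 1)\<^sup>2 * c_coef i n powr (\<tau> + 1)
                  * (((real n - real i + 1) * \<tau> * \<beta> + (real n - real i + 2) * \<beta> + \<tau>)
                     / (\<beta> * ((real n + 1) * \<tau> + (real n + 2))))
                  * (((real n - real i + 1) * \<tau> * \<beta> + (real n - real i + 1) * \<beta> + \<tau>)
                     / (\<beta> * ((real n + 1) * \<tau> + (real n + 1))))
                  * Beta a b;
             A3 = (\<beta> / \<alpha>) powr (\<tau> + 2) * 2 * (real n - real i + 1) * (real n + 1)
                  * c_coef i n powr (\<tau> + 1)
                  * (((real n - real i + 1) * \<tau> * \<beta> + (real n - real i + 1) * \<beta> + \<tau>)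
                     / ((real n + 1) * \<tau> * \<beta> + (real n + 1) * \<beta>))
                  * Beta a b
         in J_os i n \<beta> \<tau> \<alpha> = A1 + A2 - A3"
proof -
  note ap = assms(4) and bp = assms(5) and tp = assms(6)
  define a where "a = ((real n - real i + 1) * \<tau> * \<beta> + (real n - real i + 1) * \<beta> + \<tau>) / \<beta>"
  define b where "b = (real i * \<tau> * \<beta> + real i * \<beta> - \<tau>) / \<beta>"
  define K where "K = (\<beta> / \<alpha>) powr (\<tau> + 2) * c_coef i n powr (\<tau> + 1)"
  have Kp: "K \<ge> 0" unfolding K_def by simp
  have ni: "real n - real i + 1 > 0" using assms(3) by simp
  have apos: "a > 0"
  proof -
    have "(real n - real i + 1) * \<tau> * \<beta> \<ge> 0" using ni bp tp by simp
    moreover have "(real n - real i + 1) * \<beta> > 0" using ni bp by simp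
    ultimately show ?thesis unfolding a_def using bp tp by (intro divide_pos_pos) linarith+
  qed
  have bpos: "b > 0" unfolding b_def using bp assms(7) by (simp add: algebra_simps)
  define V where "V = (real (n+1) - real i)\<^sup>2 * Beta b a - 2 * (real (n+1) - real i) * real (n+1) * Beta b (a + 1)
                   + (real (n+1))\<^sup>2 * Beta b (a + 2)"
  define H where "H x = (\<beta> / \<alpha> * (real (n+1) * ((x/\<alpha>) powr \<beta> / (1 + (x/\<alpha>) powr \<beta>)) - real i))\<^sup>2
       * f_os i n \<alpha> \<beta> x powr (\<tau> + 1)" for x
  define g where "g u = \<alpha> * (u / (1 - u)) powr (1/\<beta>)" for u :: real
  define g' where "g' u = \<alpha> / \<beta> * (u / (1 - u)) powr (1/\<beta>) / (u * (1 - u))" for u :: real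
  define P where "P u = K * ((real (n+1) * u - real i)\<^sup>2 * u powr (b - 1) * (1 - u) powr (a - 1))" for u :: real
  have PI: "(P has_integral (K * V)) {0<..<1}"
    unfolding P_def V_def
    by (intro has_integral_mult_right beta_int apos bpos)
  have g'pos: "g' u > 0" if "u \<in> {0<..<1}" for u
    using that ap bp unfolding g'_def by (auto intro!: divide_pos_pos mult_pos_pos)
  have eqP: "\<bar>g' u\<bar> * H (g u) = P u" if "u \<in> {0<..<1}" for u
  proof -
    have "\<bar>g' u\<bar> = g' u" using g'pos[OF that] by simp
    then show ?thesis
      unfolding H_def g_def P_def K_def
      using subst_point[OF ap bp, of u n i \<tau>] that
      unfolding a_def b_def g'_def by (simp add: mult_ac)
  qed
  have Pnn: "P u \<ge> 0" if "u \<in> {0<..<1}" for u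
    unfolding P_def using Kp by simp
  have LHS: "(\<lambda>u. \<bar>g' u\<bar> * H (g u)) absolutely_integrable_on {0<..<1} \<and>
             integral {0<..<1} (\<lambda>u. \<bar>g' u\<bar> * H (g u)) = K * V"
  proof -
    have "((\<lambda>u. \<bar>g' u\<bar> * H (g u)) has_integral (K * V)) {0<..<1}"
      by (rule has_integral_spike_finite[OF _ _ PI, of "{}"]) (use eqP in auto)
    moreover have "(\<lambda>u. \<bar>g' u\<bar> * H (g u)) absolutely_integrable_on {0<..<1}"
      by (rule nonnegative_absolutely_integrable_1) (use calculation eqP Pnn in auto)
    ultimately show ?thesis by blast
  qed
  have der: "(g has_field_derivative g' u) (at u within {0<..<1})" if "u \<in> {0<..<1}" for u
    unfolding g_def g'_def using g_deriv[OF ap bp] that by auto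
  have inj: "inj_on g {0<..<1}"
  proof (rule inj_onI)
    fix u v :: real assume u: "u \<in> {0<..<1}" and v: "v \<in> {0<..<1}" and e: "g u = g v"
    have su: "u / (1 - u) > 0" "v / (1 - v) > 0" using u v by auto
    have "(u / (1 - u)) powr (1/\<beta>) = (v / (1 - v)) powr (1/\<beta>)" using e ap unfolding g_def by simp
    then have "((u / (1 - u)) powr (1/\<beta>)) powr \<beta> = ((v / (1 - v)) powr (1/\<beta>)) powr \<beta>" by simp
    then have "u / (1 - u) = v / (1 - v)" using su bp u v by (simp add: powr_powr)
    then show "u = v" using u v by (simp add: field_simps)
  qed
  have img: "g ` {0<..<1} = {0<..}"
  proof
    show "g ` {0<..<1} \<subseteq> {0<..}" unfolding g_def using ap by auto
  next
    show "{0<..} \<subseteq> g ` {0<..<1}"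
    proof
      fix x :: real assume x: "x \<in> {0<..}"
      define t where "t = (x / \<alpha>) powr \<beta>"
      have tp': "t > 0" unfolding t_def using x ap by simp
      define u where "u = t / (1 + t)"
      have u: "u \<in> {0<..<1}" unfolding u_def using tp' by auto
      have "u / (1 - u) = t" unfolding u_def using tp' by (simp add: field_simps)
      then have "g u = \<alpha> * t powr (1/\<beta>)" unfolding g_def by simp
      also have "t powr (1/\<beta>) = x / \<alpha>" unfolding t_def using x ap bp by (simp add: powr_powr)
      finally have "g u = x" using ap by simp
      then show "x \<in> g ` {0<..<1}" using u by (metis imageI)
    qed
  qed
  have CV: "H absolutely_integrable_on {0<..} \<and> integral {0<..} H = K * V"
    using has_absolute_integral_change_of_variables_1'[of "{0<..<1}" g g' H "K * V", OF _ der inj] LHS img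
    by auto
  have J1: "J_os i n \<beta> \<tau> \<alpha> = (LINT x:{0<..}|lborel. H x)"
    unfolding J_os_def H_def
    by (rule set_lebesgue_integral_cong) (use deriv_score[OF ap _ bp] in auto)
  have J2: "(LINT x:{0<..}|lborel. H x) = integral {0<..} H"
  proof -
    have "set_integrable lebesgue {0<..} H" using CV by (simp add: absolutely_integrable_on_def)
    then have "(LINT x:{0<..}|lebesgue. H x) = integral {0<..} H"
      by (rule set_lebesgue_integral_eq_integral)
    moreover have "(LINT x:{0<..}|lebesgue. H x) = (LINT x:{0<..}|lborel. H x)"
      unfolding set_lebesgue_integral_def
      by (rule integral_completion) (use meas_H in \<open>simp add: H_def\<close>)
    ultimately show ?thesis by simp
  qed
  have ab: "a + b = real (n+1) * (\<tau> + 1)"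
    unfolding a_def b_def using bp by (simp add: field_simps)
  have f1: "((real n - real i + 1) * \<tau> * \<beta> + (real n - real i + 1) * \<beta> + \<tau>)
                     / ((real n + 1) * \<tau> * \<beta> + (real n + 1) * \<beta>) = a / (a + b)"
    unfolding ab unfolding a_def using bp tp by (simp add: field_simps)
  have f2: "((real n - real i + 1) * \<tau> * \<beta> + (real n - real i + 1) * \<beta> + \<tau>)
                     / (\<beta> * ((real n + 1) * \<tau> + (real n + 1))) = a / (a + b)"
    unfolding ab unfolding a_def using bp tp by (simp add: field_simps)
  have f3: "((real n - real i + 1) * \<tau> * \<beta> + (real n - real i + 2) * \<beta> + \<tau>)
                     / (\<beta> * ((real n + 1) * \<tau> + (real n + 2))) = (a + 1) / (a + b + 1)"
    unfolding ab unfolding a_def using bp tp by (simp add: field_simps)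
  define X where "X = a / (a + b)"
  define Y where "Y = (a + 1) / (a + b + 1)"
  have br1: "Beta b (a + 1) = X * Beta a b" unfolding X_def using beta_red[OF apos bpos] by simp
  have br2: "Beta b (a + 2) = X * Y * Beta a b" unfolding X_def Y_def using beta_red[OF apos bpos] by simp
  have KV: "K * V = (\<beta> / \<alpha>) powr (\<tau> + 2) * (real n - real i + 1)\<^sup>2 * c_coef i n powr (\<tau> + 1) * Beta a b
     + (\<beta> / \<alpha>) powr (\<tau> + 2) * (real n + 1)\<^sup>2 * c_coef i n powr (\<tau> + 1)
                  * Y * X * Beta a b
     - (\<beta> / \<alpha>) powr (\<tau> + 2) * 2 * (real n - real i + 1) * (real n + 1)
                  * c_coef i n powr (\<tau> + 1) * X * Beta a b"
    unfolding K_def V_def br1 br2 Beta_commute[of b a]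
    by (simp add: algebra_simps)
  show ?thesis
    unfolding Let_def a_def[symmetric] b_def[symmetric] f1 f2 f3
    using J1 J2 CV KV unfolding X_def Y_def by simp
qed

end
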